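(* Let $n\ge 1$, let $G=P_n$ be the path with vertex set $\{1,\dots,n\}$ and edges $\{i,i+1\}$ for $1\le i<n$, and let $C\subseteq V(G)$ be such that no vertex of $V(G)\setminus C$ is isolated. If $C$ is a good configuration for $G$, then $\gamma_{\rm gr}(G;C)=n$; otherwise $\gamma_{\rm gr}(G;C)=n-1$.
   Context: $N\langle v\rangle = N[v]$ (closed neighborhood) if $v\in C$ and $N\langle v\rangle=N(v)$ (open neighborhood) if $v\notin C$. A sequence $(v_1,\dots,v_k)$ of distinct vertices is legal if $N\langle v_i\rangle\setminus\bigcup_{j<i}N\langle v_j\rangle\neq\emptyset$ for all $i\ge 2$, and dominating if $\bigcup_j N\langle v_j\rangle=V$; $\gamma_{\rm gr}(G;C)$ is the maximum length of a legal dominating sequence. Good configuration (defined for a path with vertices $a_1,\dots,a_n$ in order, applied to $C\cap\{a_1,\dots,a_n\}$; isolated vertices outside $C$ are allowed in this definition): $C$ is a good configuration for the path if (i) $n=1$ and $a_1\in C$; or (ii) $n=2$ and $\{a_1,a_2\}\not\subseteq C$; or (iii) $n\ge 3$ and either $a_1\notin C$ and $C$ is a good configuration for the subpath $(a_3,\dots,a_n)$, or $a_n\notin C$ and $C$ is a good configuration for the subpath $(a_1,\dots,a_{n-2})$. *)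

theory Defs
  imports Main
begin

definition open_nbhd :: "'a set \<Rightarrow> ('a \<Rightarrow> 'a \<Rightarrow> bool) \<Rightarrow> 'a \<Rightarrow> 'a set" where
  "open_nbhd V E v = {u \<in> V. E v u}"

definition closed_nbhd :: "'a set \<Rightarrow> ('a \<Rightarrow> 'a \<Rightarrow> bool) \<Rightarrow> 'a \<Rightarrow> 'a set" where
  "closed_nbhd V E v = insert v (open_nbhd V E v)"

definition nbhdC :: "'a set \<Rightarrow> ('a \<Rightarrow> 'a \<Rightarrow> bool) \<Rightarrow> 'a set \<Rightarrow> 'a \<Rightarrow> 'a set" where
  "nbhdC V E C v = (if v \<in> C then closed_nbhd V E v else open_nbhd V E v)"

definition legal_seq :: "'a set \<Rightarrow> ('a \<Rightarrow> 'a \<Rightarrow> bool) \<Rightarrow> 'a set \<Rightarrow> 'a list \<Rightarrow> bool" where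
  "legal_seq V E C vs \<longleftrightarrow> distinct vs \<and> set vs \<subseteq> V \<and>
     (\<forall>i. 0 < i \<and> i < length vs \<longrightarrow>
        nbhdC V E C (vs ! i) - (\<Union>j<i. nbhdC V E C (vs ! j)) \<noteq> {})"

definition dominating_seq :: "'a set \<Rightarrow> ('a \<Rightarrow> 'a \<Rightarrow> bool) \<Rightarrow> 'a set \<Rightarrow> 'a list \<Rightarrow> bool" where
  "dominating_seq V E C vs \<longleftrightarrow> (\<Union>v\<in>set vs. nbhdC V E C v) = V"

definition gamma_gr :: "'a set \<Rightarrow> ('a \<Rightarrow> 'a \<Rightarrow> bool) \<Rightarrow> 'a set \<Rightarrow> nat" where
  "gamma_gr V E C = Max {length vs | vs. legal_seq V E C vs \<and> dominating_seq V E C vs}"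

definition path_vertices :: "nat \<Rightarrow> nat set" where
  "path_vertices n = {1..n}"

definition path_adj :: "nat \<Rightarrow> nat \<Rightarrow> bool" where
  "path_adj u v \<longleftrightarrow> u = v + 1 \<or> v = u + 1"

text \<open>good C a m: C is a good configuration for the path with vertices a, a+1, ..., a+m-1
  (i.e. a_1 = a, ..., a_m = a+m-1).\<close>
fun good_config :: "nat set \<Rightarrow> nat \<Rightarrow> nat \<Rightarrow> bool" where
  "good_config C a 0 = False"
| "good_config C a (Suc 0) = (a \<in> C)"
| "good_config C a (Suc (Suc 0)) = (\<not> {a, a + 1} \<subseteq> C)"
| "good_config C a (Suc (Suc (Suc m))) =
     ((a \<notin> C \<and> good_config C (a + 2) (Suc m)) \<or>
      (a + m + 2 \<notin> C \<and> good_config C a (Suc m)))"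

end

theory Submission
  imports Defs
begin

definition NB :: "nat \<Rightarrow> nat \<Rightarrow> nat set \<Rightarrow> nat \<Rightarrow> nat set" where
  "NB a m C v = nbhdC {a..<a+m} path_adj C v"

lemma mem_NB: "u \<in> NB a m C v \<longleftrightarrow> (a \<le> u \<and> u < a+m \<and> (u = v+1 \<or> v = u+1)) \<or> (u = v \<and> v \<in> C)"
  by (auto simp: NB_def nbhdC_def closed_nbhd_def open_nbhd_def path_adj_def)

lemma NB_mono: "a \<le> a' \<Longrightarrow> a'+m' \<le> a+m \<Longrightarrow> NB a' m' C u \<subseteq> NB a m C u"
  by (auto simp: mem_NB)

fun slB :: "('a \<Rightarrow> 'a set) \<Rightarrow> 'a set \<Rightarrow> 'a list \<Rightarrow> bool" where
  "slB N B [] = True"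
| "slB N B (v#vs) = (N v - B \<noteq> {} \<and> slB N (B \<union> N v) vs)"

lemma slB_append: "slB N B (xs @ ys) \<longleftrightarrow> slB N B xs \<and> slB N (B \<union> \<Union>(N ` set xs)) ys"
  by (induction xs arbitrary: B) (auto simp: Un_assoc)

lemma slB_dec: "slB N B (xs @ v # ys) \<Longrightarrow> N v - (B \<union> \<Union>(N ` set xs)) \<noteq> {}"
  by (simp add: slB_append)

lemma slB_intro: "(\<And>xs v ys. vs = xs @ v # ys \<Longrightarrow> N v - (B \<union> \<Union>(N ` set xs)) \<noteq> {}) \<Longrightarrow> slB N B vs"
proof (induction vs arbitrary: B)
  case Nil then show ?case by simp
next
  case (Cons v vs)
  have "N v - B \<noteq> {}" using Cons.prems[of "[]" v vs] by simp
  moreover have "slB N (B \<union> N v) vs"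
  proof (rule Cons.IH)
    fix xs w ys assume "vs = xs @ w # ys"
    then have "v # vs = (v#xs) @ w # ys" by simp
    from Cons.prems[OF this] show "N w - (B \<union> N v \<union> \<Union>(N ` set xs)) \<noteq> {}"
      by (simp add: Un_assoc)
  qed
  ultimately show ?case by simp
qed

lemma slB_transfer: "slB N' (B \<inter> W) S \<Longrightarrow> (\<forall>v\<in>set S. N' v = N v \<inter> W) \<Longrightarrow> slB N B S"
proof (induction S arbitrary: B)
  case Nil then show ?case by simp
next
  case (Cons v S)
  have e: "N' v = N v \<inter> W" using Cons.prems by simp
  have "N v - B \<noteq> {}" using Cons.prems(1) e by auto
  moreover have "(B \<union> N v) \<inter> W = B \<inter> W \<union> N' v" using e by auto
  then have "slB N' ((B \<union> N v) \<inter> W) S" using Cons.prems(1) by simp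
  then have "slB N (B \<union> N v) S" using Cons.IH Cons.prems(2) by simp
  ultimately show ?case by simp
qed

lemma slB_card: "(\<And>v. finite (N v)) \<Longrightarrow> finite B \<Longrightarrow> slB N B vs \<Longrightarrow>
   card B + length vs \<le> card (B \<union> \<Union>(N ` set vs))"
proof (induction vs arbitrary: B)
  case Nil then show ?case by simp
next
  case (Cons v vs)
  have f: "finite (B \<union> N v)" using Cons.prems by simp
  have "B \<subset> B \<union> N v" using Cons.prems(3) by auto
  then have "card B < card (B \<union> N v)" using psubset_card_mono[OF f] by blast
  moreover have "card (B \<union> N v) + length vs \<le> card (B \<union> N v \<union> \<Union>(N ` set vs))"
    using Cons.IH[OF Cons.prems(1) f] Cons.prems(3) by simp
  ultimately show ?case by (simp add: Un_assoc)
qed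

lemma filter_split: "filter P vs = ys1 @ w # ys2 \<Longrightarrow> \<exists>zs1 zs2. vs = zs1 @ w # zs2 \<and> set ys1 \<subseteq> set zs1"
proof (induction vs arbitrary: ys1)
  case Nil then show ?case by simp
next
  case (Cons x vs)
  show ?case
  proof (cases "P x")
    case True
    show ?thesis
    proof (cases ys1)
      case Nil then show ?thesis using Cons.prems True by auto
    next
      case (Cons y ys1')
      then have "filter P vs = ys1' @ w # ys2" "y = x" using Cons.prems True by auto
      from Cons.IH[OF this(1)] obtain zs1 zs2 where "vs = zs1 @ w # zs2" "set ys1' \<subseteq> set zs1" by blast
      then show ?thesis using \<open>ys1 = y # ys1'\<close> \<open>y = x\<close> by (intro exI[of _ "x#zs1"] exI[of _ zs2]) auto
    qed
  next
    case False
    then have "filter P vs = ys1 @ w # ys2" using Cons.prems by simp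
    from Cons.IH[OF this] obtain zs1 zs2 where "vs = zs1 @ w # zs2" "set ys1 \<subseteq> set zs1" by blast
    then show ?thesis by (intro exI[of _ "x#zs1"] exI[of _ zs2]) auto
  qed
qed


lemma good_ex: "good_config C a m \<Longrightarrow> \<exists>vs. distinct vs \<and> set vs = {a..<a+m} \<and> slB (NB a m C) {} vs"
proof (induction C a m rule: good_config.induct)
  case (1 C a) then show ?case by simp
next
  case (2 C a)
  then have "slB (NB a 1 C) {} [a]" by (auto simp: mem_NB)
  then show ?case by (intro exI[of _ "[a]"]) auto
next
  case (3 C a)
  show ?case
  proof (cases "a \<in> C")
    case False
    have "a+1 \<in> NB a (Suc (Suc 0)) C a" "a \<in> NB a (Suc (Suc 0)) C (a+1)" "a \<notin> NB a (Suc (Suc 0)) C a"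
      using False by (auto simp: mem_NB)
    then have "slB (NB a (Suc (Suc 0)) C) {} [a, a+1]" by auto
    then show ?thesis by (intro exI[of _ "[a, a+1]"]) auto
  next
    case True
    then have "a+1 \<notin> C" using 3 by simp
    then have "a \<in> NB a (Suc (Suc 0)) C (a+1)" "a+1 \<in> NB a (Suc (Suc 0)) C a" "a+1 \<notin> NB a (Suc (Suc 0)) C (a+1)"
      using True by (auto simp: mem_NB)
    then have "slB (NB a (Suc (Suc 0)) C) {} [a+1, a]" by auto
    then show ?thesis by (intro exI[of _ "[a+1, a]"]) auto
  qed
next
  case (4 C a m)
  let ?L = "Suc (Suc (Suc m))"
  let ?N = "NB a ?L C"
  from "4.prems" consider "a \<notin> C" "good_config C (a + 2) (Suc m)"
    | "a + m + 2 \<notin> C" "good_config C a (Suc m)" by auto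
  then show ?case
  proof cases
    case 1
    from "4.IH"(1)[OF 1(2)] obtain S where S: "distinct S" "set S = {a+2..<a+2+Suc m}"
      "slB (NB (a+2) (Suc m) C) {} S" by blast
    have Na: "?N a = {a+1}" using 1 by (auto simp: mem_NB)
    have "{a+1} \<inter> {a+2..<a+2+Suc m} = {}" by auto
    then have s0: "slB (NB (a+2) (Suc m) C) ({a+1} \<inter> {a+2..<a+2+Suc m}) S" using S(3) by simp
    have "\<forall>v\<in>set S. NB (a+2) (Suc m) C v = ?N v \<inter> {a+2..<a+2+Suc m}"
    proof
      fix v assume "v \<in> set S"
      then have v: "a+2 \<le> v" "v < a+2+Suc m" using S(2) by auto
      show "NB (a+2) (Suc m) C v = ?N v \<inter> {a+2..<a+2+Suc m}"
      proof (rule set_eqI)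
        fix u show "u \<in> NB (a+2) (Suc m) C v \<longleftrightarrow> u \<in> ?N v \<inter> {a+2..<a+2+Suc m}"
          unfolding mem_NB Int_iff atLeastLessThan_iff using v by linarith
      qed
    qed
    from slB_transfer[OF s0 this] have s1: "slB ?N {a+1} S" .
    have "\<forall>w\<in>set S. a \<notin> ?N w"
    proof
      fix w assume "w \<in> set S"
      then have "a+2 \<le> w" using S(2) by auto
      then show "a \<notin> ?N w" unfolding mem_NB by linarith
    qed
    moreover have "a \<in> ?N (a+1)" "a \<notin> ?N a" using 1(1) unfolding mem_NB by auto
    ultimately have "a \<in> ?N (a+1) - ({a+1} \<union> \<Union>(?N ` set S))" by auto
    then have s2: "slB ?N ({a+1} \<union> \<Union>(?N ` set S)) [a+1]" by auto
    have "slB ?N {} (a # S @ [a+1])" using Na s1 s2 by (simp add: slB_append)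
    moreover have "distinct (a # S @ [a+1])" using S by auto
    moreover have "set (a # S @ [a+1]) = {a..<a+?L}" using S by auto
    ultimately show ?thesis by blast
  next
    case 2
    from "4.IH"(2)[OF 2(2)] obtain S where S: "distinct S" "set S = {a..<a+Suc m}"
      "slB (NB a (Suc m) C) {} S" by blast
    have Na: "?N (a+m+2) = {a+m+1}" using 2 by (auto simp: mem_NB)
    have "{a+m+1} \<inter> {a..<a+Suc m} = {}" by auto
    then have s0: "slB (NB a (Suc m) C) ({a+m+1} \<inter> {a..<a+Suc m}) S" using S(3) by simp
    have "\<forall>v\<in>set S. NB a (Suc m) C v = ?N v \<inter> {a..<a+Suc m}"
    proof
      fix v assume "v \<in> set S"
      then have v: "a \<le> v" "v < a+Suc m" using S(2) by auto
      show "NB a (Suc m) C v = ?N v \<inter> {a..<a+Suc m}"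
      proof (rule set_eqI)
        fix u show "u \<in> NB a (Suc m) C v \<longleftrightarrow> u \<in> ?N v \<inter> {a..<a+Suc m}"
          unfolding mem_NB Int_iff atLeastLessThan_iff using v by linarith
      qed
    qed
    from slB_transfer[OF s0 this] have s1: "slB ?N {a+m+1} S" .
    have "\<forall>w\<in>set S. a+m+2 \<notin> ?N w"
    proof
      fix w assume "w \<in> set S"
      then have "w < a+Suc m" using S(2) by auto
      then show "a+m+2 \<notin> ?N w" unfolding mem_NB by linarith
    qed
    moreover have "a+m+2 \<in> ?N (a+m+1)" using 2(1) unfolding mem_NB by auto
    ultimately have "a+m+2 \<in> ?N (a+m+1) - ({a+m+1} \<union> \<Union>(?N ` set S))" by auto
    then have s2: "slB ?N ({a+m+1} \<union> \<Union>(?N ` set S)) [a+m+1]" by auto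
    have "slB ?N {} ((a+m+2) # S @ [a+m+1])" using Na s1 s2 by (simp add: slB_append)
    moreover have "distinct ((a+m+2) # S @ [a+m+1])" using S by auto
    moreover have "set ((a+m+2) # S @ [a+m+1]) = {a..<a+?L}" using S by auto
    ultimately show ?thesis by blast
  qed
qed


lemma good_nec:
  "1 \<le> m \<Longrightarrow> distinct vs \<Longrightarrow> set vs = {a..<a+m} \<Longrightarrow> slB (NB a m C) {} vs \<Longrightarrow> good_config C a m"
proof (induction m arbitrary: a vs rule: less_induct)
  case (less m)
  have "m = 1 \<or> m = 2 \<or> (\<exists>k. m = Suc (Suc (Suc k)))" using less.prems(1) by presburger
  then consider "m = Suc 0" | "m = Suc (Suc 0)" | k where "m = Suc (Suc (Suc k))" by auto
  then show ?case
  proof cases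
    case 1
    obtain v rest where vs: "vs = v # rest" using less.prems(3) 1 by (cases vs) auto
    have "v = a" using less.prems(3) 1 vs by (metis atLeastLessThan_iff add_Suc_right add_0_right
        less_Suc_eq_le le_antisym list.set_intros(1))
    have "NB a m C v \<noteq> {}" using less.prems(4) vs by simp
    then obtain y where "y \<in> NB a m C v" by blast
    then have "a \<in> C" using \<open>v = a\<close> 1 unfolding mem_NB by auto
    then show ?thesis using 1 by simp
  next
    case 2
    show ?thesis
    proof (rule ccontr)
      assume "\<not> good_config C a m"
      then have C: "a \<in> C" "a+1 \<in> C" using 2 by auto
      obtain xs v where vs: "vs = xs @ [v]" using less.prems(3) 2 by (cases vs rule: rev_exhaust) auto
      have vV: "v \<in> {a..<a+m}" using less.prems(3) vs by auto
      define u where "u = (if v = a then a+1 else a)"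
      have "u \<in> set vs" "u \<noteq> v" using vV 2 less.prems(3) by (auto simp: u_def)
      then have u: "u \<in> set xs" using vs by auto
      have "v = a \<or> v = a + 1" using vV 2 by auto
      then have "NB a m C v = NB a m C u" using 2 C unfolding u_def
        by (auto simp: mem_NB)
      then have "NB a m C v - ({} \<union> \<Union>(NB a m C ` set xs)) = {}" using u by auto
      moreover have "NB a m C v - ({} \<union> \<Union>(NB a m C ` set xs)) \<noteq> {}"
        using slB_dec[of "NB a m C" "{}" xs v "[]"] less.prems(4) vs by simp
      ultimately show False by simp
    qed
  next
    case 3
    let ?N = "NB a m C"
    obtain xs v where vs: "vs = xs @ [v]" using less.prems(3) 3 by (cases vs rule: rev_exhaust) auto
    have vV: "a \<le> v" "v < a+m" using less.prems(3) vs by auto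
    have setxs: "set xs = {a..<a+m} - {v}" using less.prems(2,3) vs by auto
    have "?N v - ({} \<union> \<Union>(?N ` set xs)) \<noteq> {}"
      using slB_dec[of ?N "{}" xs v "[]"] less.prems(4) vs by simp
    then obtain x where xv: "x \<in> ?N v" and xn: "\<forall>w\<in>set xs. x \<notin> ?N w" by blast
    have H: "x \<notin> ?N w" if "a \<le> w" "w < a+m" "w \<noteq> v" for w
      using xn setxs that by auto
    have xV: "a \<le> x" "x < a+m" using xv vV unfolding mem_NB by auto
    have c1: "x - 1 < a \<or> x - 1 = v \<or> x = 0"
    proof (rule ccontr)
      assume n: "\<not> (x - 1 < a \<or> x - 1 = v \<or> x = 0)"
      then have n1: "x \<noteq> 0" "a \<le> x - 1" "x - 1 \<noteq> v" by auto
      then have "x \<notin> ?N (x-1)" using H[of "x-1"] xV by auto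
      moreover have "x = (x - 1) + 1" using n1 by simp
      then have "x \<in> ?N (x-1)" using xV unfolding mem_NB by blast
      ultimately show False by simp
    qed
    have c2: "a + m \<le> x + 1 \<or> x + 1 = v"
    proof (rule ccontr)
      assume n: "\<not> (a + m \<le> x + 1 \<or> x + 1 = v)"
      then have "x \<notin> ?N (x+1)" using H[of "x+1"] xV by auto
      moreover have "x \<in> ?N (x+1)" using xV n unfolding mem_NB by auto
      ultimately show False by simp
    qed
    have c3: "x \<notin> C \<or> x = v"
      using H[of x] xV unfolding mem_NB by auto
    have c0: "x \<noteq> v" using c1 c2 xV 3 by auto
    have xC: "x \<notin> C" using c3 c0 by simp
    have adj: "x = v + 1 \<or> v = x + 1" using xv c0 unfolding mem_NB by auto
    have "(x = a \<and> v = a + 1) \<or> (x = a + k + 2 \<and> v = a + k + 1)"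
      using adj c1 c2 xV 3 by auto
    then show ?thesis
    proof
      assume xa: "x = a \<and> v = a + 1"
      then have aC: "a \<notin> C" using xC by simp
      define S where "S = filter (\<lambda>u. a+2 \<le> u) vs"
      have dS: "distinct S" using less.prems(2) by (simp add: S_def)
      have sS: "set S = {a+2..<a+2+Suc k}" using less.prems(3) 3 by (auto simp: S_def)
      have "slB (NB (a+2) (Suc k) C) {} S"
      proof (rule slB_intro)
        fix ys1 w ys2 assume Sd: "S = ys1 @ w # ys2"
        then obtain zs1 zs2 where vd: "vs = zs1 @ w # zs2" and sub: "set ys1 \<subseteq> set zs1"
          using filter_split[of "\<lambda>u. a+2 \<le> u" vs ys1 w ys2] by (auto simp: S_def)
        have wV: "a+2 \<le> w" "w < a+2+Suc k" using Sd sS by auto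
        have "?N w - ({} \<union> \<Union>(?N ` set zs1)) \<noteq> {}" using slB_dec less.prems(4) vd by metis
        then obtain y where yw: "y \<in> ?N w" and yn: "\<forall>u\<in>set zs1. y \<notin> ?N u" by blast
        have ya: "y \<noteq> a" using yw wV unfolding mem_NB by auto
        have ya1: "y \<noteq> a + 1"
        proof
          assume y1: "y = a + 1"
          have "a \<in> set vs" using less.prems(3) 3 by auto
          then have "a \<in> set zs1 \<or> a \<in> set zs2" using vd wV by auto
          then show False
          proof
            assume "a \<in> set zs1"
            moreover have "a + 1 \<in> ?N a" using 3 unfolding mem_NB by auto
            ultimately show False using yn y1 by blast
          next
            assume "a \<in> set zs2"
            then obtain p q where "zs2 = p @ a # q" by (meson split_list)
            then have "vs = (zs1 @ w # p) @ a # q" using vd by simp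
            then have "?N a - ({} \<union> \<Union>(?N ` set (zs1 @ w # p))) \<noteq> {}"
              using slB_dec less.prems(4) by metis
            then obtain z where "z \<in> ?N a" "z \<notin> ?N w" by auto
            moreover have "z = a + 1" using \<open>z \<in> ?N a\<close> aC unfolding mem_NB by auto
            ultimately show False using yw y1 by simp
          qed
        qed
        have yV': "a+2 \<le> y" "y < a+2+Suc k" using yw wV ya ya1 3 unfolding mem_NB by auto
        have "y \<in> NB (a+2) (Suc k) C w" using yw yV' unfolding mem_NB by auto
        moreover have "y \<notin> NB (a+2) (Suc k) C u" if "u \<in> set ys1" for u
        proof -
          have "NB (a+2) (Suc k) C u \<subseteq> ?N u" using 3 by (intro NB_mono) auto
          then show ?thesis using yn sub that by blast
        qed
        ultimately show "NB (a+2) (Suc k) C w - ({} \<union> \<Union>(NB (a+2) (Suc k) C ` set ys1)) \<noteq> {}"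
          by blast
      qed
      then have "good_config C (a+2) (Suc k)" using less.IH[of "Suc k" S "a+2"] dS sS 3 by simp
      then show ?thesis using 3 aC by simp
    next
      assume xa: "x = a + k + 2 \<and> v = a + k + 1"
      then have aC: "a + k + 2 \<notin> C" using xC by simp
      define S where "S = filter (\<lambda>u. u < a+k+1) vs"
      have dS: "distinct S" using less.prems(2) by (simp add: S_def)
      have sS: "set S = {a..<a+Suc k}" using less.prems(3) 3 by (auto simp: S_def)
      have "slB (NB a (Suc k) C) {} S"
      proof (rule slB_intro)
        fix ys1 w ys2 assume Sd: "S = ys1 @ w # ys2"
        then obtain zs1 zs2 where vd: "vs = zs1 @ w # zs2" and sub: "set ys1 \<subseteq> set zs1"
          using filter_split[of "\<lambda>u. u < a+k+1" vs ys1 w ys2] by (auto simp: S_def)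
        have wV: "a \<le> w" "w < a+Suc k" using Sd sS by auto
        have "?N w - ({} \<union> \<Union>(?N ` set zs1)) \<noteq> {}" using slB_dec less.prems(4) vd by metis
        then obtain y where yw: "y \<in> ?N w" and yn: "\<forall>u\<in>set zs1. y \<notin> ?N u" by blast
        have ya: "y \<noteq> a + k + 2" using yw wV unfolding mem_NB by auto
        have ya1: "y \<noteq> a + k + 1"
        proof
          assume y1: "y = a + k + 1"
          have "a + k + 2 \<in> set vs" using less.prems(3) 3 by auto
          then have "a + k + 2 \<in> set zs1 \<or> a + k + 2 \<in> set zs2" using vd wV by auto
          then show False
          proof
            assume "a + k + 2 \<in> set zs1"
            moreover have "a + k + 1 \<in> ?N (a + k + 2)" using 3 unfolding mem_NB by auto
            ultimately show False using yn y1 by blast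
          next
            assume "a + k + 2 \<in> set zs2"
            then obtain p q where "zs2 = p @ (a + k + 2) # q" by (meson split_list)
            then have "vs = (zs1 @ w # p) @ (a + k + 2) # q" using vd by simp
            then have "?N (a + k + 2) - ({} \<union> \<Union>(?N ` set (zs1 @ w # p))) \<noteq> {}"
              using slB_dec less.prems(4) by metis
            then obtain z where "z \<in> ?N (a + k + 2)" "z \<notin> ?N w" by auto
            moreover have "z = a + k + 1" using \<open>z \<in> ?N (a + k + 2)\<close> aC 3 unfolding mem_NB by auto
            ultimately show False using yw y1 by simp
          qed
        qed
        have yV': "a \<le> y" "y < a+Suc k" using yw wV ya ya1 3 unfolding mem_NB by auto
        have "y \<in> NB a (Suc k) C w" using yw yV' unfolding mem_NB by auto
        moreover have "y \<notin> NB a (Suc k) C u" if "u \<in> set ys1" for u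
        proof -
          have "NB a (Suc k) C u \<subseteq> ?N u" using 3 by (intro NB_mono) auto
          then show ?thesis using yn sub that by blast
        qed
        ultimately show "NB a (Suc k) C w - ({} \<union> \<Union>(NB a (Suc k) C ` set ys1)) \<noteq> {}"
          by blast
      qed
      then have "good_config C a (Suc k)" using less.IH[of "Suc k" S a] dS sS 3 by simp
      then show ?thesis using 3 aC by (simp add: add.assoc)
    qed
  qed
qed


lemma UN_take: "i \<le> length vs \<Longrightarrow> (\<Union>j<i. N (vs ! j)) = \<Union>(N ` set (take i vs))"
proof -
  assume "i \<le> length vs"
  then have "set (take i vs) = (!) vs ` {..<i}" using nth_image[of i vs] by (simp add: atLeast0LessThan)
  then show ?thesis by (simp add: image_image)
qed

lemma legal_of_slB:
  assumes "slB N {} vs" "distinct vs" "set vs \<subseteq> V" "nbhdC V E C = N"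
  shows "legal_seq V E C vs"
  unfolding legal_seq_def
proof (intro conjI allI impI)
  fix i assume i: "0 < i \<and> i < length vs"
  have d: "vs = take i vs @ vs ! i # drop (Suc i) vs" using i by (simp add: id_take_nth_drop)
  have "N (vs ! i) - ({} \<union> \<Union>(N ` set (take i vs))) \<noteq> {}"
    using slB_dec[of N "{}" "take i vs" "vs ! i" "drop (Suc i) vs"] assms(1) d by simp
  then show "nbhdC V E C (vs ! i) - (\<Union>j<i. nbhdC V E C (vs ! j)) \<noteq> {}"
    using UN_take[of i vs N] i assms(4) by simp
qed (use assms in auto)

lemma slB_of_legal:
  assumes "legal_seq V E C vs" "\<forall>v\<in>set vs. nbhdC V E C v \<noteq> {}"
  shows "slB (nbhdC V E C) {} vs"
proof (rule slB_intro)
  fix xs v ys assume d: "vs = xs @ v # ys"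
  show "nbhdC V E C v - ({} \<union> \<Union>(nbhdC V E C ` set xs)) \<noteq> {}"
  proof (cases "xs = []")
    case True then show ?thesis using assms(2) d by simp
  next
    case False
    let ?i = "length xs"
    have i: "0 < ?i" "?i < length vs" using False d by auto
    have "vs ! ?i = v" "take ?i vs = xs" using d by auto
    moreover have "nbhdC V E C (vs ! ?i) - (\<Union>j<?i. nbhdC V E C (vs ! j)) \<noteq> {}"
      using assms(1) i unfolding legal_seq_def by blast
    ultimately show ?thesis using i UN_take[of ?i vs "nbhdC V E C"] by simp
  qed
qed

theorem corollary2:
  fixes n :: nat and C :: "nat set"
  assumes "n \<ge> 1"
    and "C \<subseteq> path_vertices n"
    and "\<forall>v \<in> path_vertices n - C. open_nbhd (path_vertices n) path_adj v \<noteq> {}"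
  shows "gamma_gr (path_vertices n) path_adj C = (if good_config C 1 n then n else n - 1)"
proof -
  let ?V = "path_vertices n"
  let ?L = "{length vs | vs. legal_seq ?V path_adj C vs \<and> dominating_seq ?V path_adj C vs}"
  have V: "?V = {1..<1+n}" unfolding path_vertices_def by auto
  have cV: "card ?V = n" using V by simp
  have NBeq: "nbhdC ?V path_adj C = NB 1 n C" using V by (auto simp: NB_def fun_eq_iff)
  have ub: "l \<le> n" if lL: "l \<in> ?L" for l
  proof -
    obtain vs where "l = length vs" "legal_seq ?V path_adj C vs" using lL by blast
    then have "distinct vs" "set vs \<subseteq> ?V" "l = card (set vs)" unfolding legal_seq_def
      by (auto simp: distinct_card)
    then show ?thesis using cV card_mono[of ?V "set vs"] V by auto
  qed
  have fin: "finite ?L" using ub by (meson finite_atMost finite_subset subsetI atMost_iff)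
  have nec: "good_config C 1 n" if nL: "n \<in> ?L"
  proof -
    obtain vs where vs: "n = length vs" "legal_seq ?V path_adj C vs" using nL by blast
    then have dv: "distinct vs" "set vs \<subseteq> ?V" unfolding legal_seq_def by auto
    have "card (set vs) = n" using dv vs by (simp add: distinct_card)
    then have sv: "set vs = ?V" using dv cV card_seteq[of ?V "set vs"] V by auto
    have "\<forall>v\<in>set vs. nbhdC ?V path_adj C v \<noteq> {}"
    proof
      fix v assume "v \<in> set vs"
      show "nbhdC ?V path_adj C v \<noteq> {}"
      proof (cases "v \<in> C")
        case True then show ?thesis by (simp add: nbhdC_def closed_nbhd_def)
      next
        case False then show ?thesis using assms(3) sv \<open>v \<in> set vs\<close> by (simp add: nbhdC_def)
      qed
    qed
    from slB_of_legal[OF vs(2) this] have "slB (NB 1 n C) {} vs" using NBeq by simp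
    then show ?thesis using good_nec[of n vs 1 C] assms(1) dv sv V by simp
  qed
  have suff: "n \<in> ?L" if g: "good_config C 1 n"
  proof -
    obtain vs where vs: "distinct vs" "set vs = {1..<1+n}" "slB (NB 1 n C) {} vs"
      using good_ex[OF g] by blast
    have len: "length vs = n" using vs by (simp add: distinct_card[symmetric])
    have leg: "legal_seq ?V path_adj C vs" using legal_of_slB[OF vs(3) vs(1)] vs(2) V NBeq by simp
    have sub: "(\<Union>v\<in>set vs. NB 1 n C v) \<subseteq> ?V" using vs(2) V by (auto simp: mem_NB)
    have fN: "finite (NB 1 n C v)" for v
      by (rule finite_subset[of _ "insert v {1..<1+n}"]) (auto simp: mem_NB)
    have "card ({} \<union> \<Union>(NB 1 n C ` set vs)) \<ge> card {} + length vs"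
      using slB_card[of "NB 1 n C" "{}" vs] fN vs(3) by simp
    then have "card (\<Union>v\<in>set vs. NB 1 n C v) \<ge> n" using len by simp
    then have "(\<Union>v\<in>set vs. NB 1 n C v) = ?V" using sub cV card_seteq[OF _ sub] V by auto
    then have "dominating_seq ?V path_adj C vs" unfolding dominating_seq_def using NBeq by simp
    then show ?thesis using leg len by blast
  qed
  show ?thesis
  proof (cases "good_config C 1 n")
    case True
    have "n \<in> ?L" using suff True .
    then have "Max ?L = n" using ub fin by (intro Max_eqI) auto
    then show ?thesis using True unfolding gamma_gr_def by simp
  next
    case False
    have n2: "n \<ge> 2"
    proof (rule ccontr)
      assume "\<not> n \<ge> 2"
      then have n1: "n = 1" using assms(1) by simp
      have "1 \<notin> C" using False n1 by simp
      then have "open_nbhd ?V path_adj 1 \<noteq> {}" using assms(3) n1 V by auto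
      then show False using n1 by (auto simp: open_nbhd_def path_vertices_def path_adj_def)
    qed
    define vs where "vs = [1..<n]"
    have sv: "set vs = {1..<n}" by (simp add: vs_def)
    have nth: "vs ! j = j + 1" if "j < n - 1" for j using that by (simp add: vs_def)
    have lv: "length vs = n - 1" by (simp add: vs_def)
    have leg: "legal_seq ?V path_adj C vs"
      unfolding legal_seq_def
    proof (intro conjI allI impI)
      show "distinct vs" by (simp add: vs_def)
      show "set vs \<subseteq> ?V" using sv V by auto
      fix i assume i: "0 < i \<and> i < length vs"
      have "i + 2 \<in> NB 1 n C (vs ! i)" using i lv nth[of i] by (auto simp: mem_NB)
      moreover have "i + 2 \<notin> NB 1 n C (vs ! j)" if "j < i" for j
        using that i lv nth[of j] by (auto simp: mem_NB)
      ultimately show "nbhdC ?V path_adj C (vs ! i) - (\<Union>j<i. nbhdC ?V path_adj C (vs ! j)) \<noteq> {}"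
        using NBeq by auto
    qed
    have dom: "dominating_seq ?V path_adj C vs"
      unfolding dominating_seq_def NBeq
    proof
      show "(\<Union>v\<in>set vs. NB 1 n C v) \<subseteq> ?V" using sv V by (auto simp: mem_NB)
      show "?V \<subseteq> (\<Union>v\<in>set vs. NB 1 n C v)"
      proof
        fix u assume u: "u \<in> ?V"
        show "u \<in> (\<Union>v\<in>set vs. NB 1 n C v)"
        proof (cases "u \<ge> 2")
          case True
          then have "u - 1 \<in> set vs" "u \<in> NB 1 n C (u - 1)" using u V sv by (auto simp: mem_NB)
          then show ?thesis by blast
        next
          case False
          then have u1: "u = 1" using u V by auto
          show ?thesis
          proof (cases "n \<ge> 3")
            case True
            then have "2 \<in> set vs" "u \<in> NB 1 n C 2" using u1 sv by (auto simp: mem_NB)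
            then show ?thesis by blast
          next
            case n3: False
            then have "n = 2" using n2 by simp
            then have "1 \<in> C" using \<open>\<not> good_config C 1 n\<close>
              by (simp add: numeral_2_eq_2)
            then have "1 \<in> set vs" "u \<in> NB 1 n C 1" using u1 sv n2 by (auto simp: mem_NB)
            then show ?thesis by blast
          qed
        qed
      qed
    qed
    have inL: "n - 1 \<in> ?L" unfolding mem_Collect_eq by (rule exI[of _ vs]) (simp add: leg dom lv)
    have "l \<le> n - 1" if "l \<in> ?L" for l
    proof -
      have "l \<noteq> n" using nec False that by blast
      then show ?thesis using ub[OF that] by simp
    qed
    then have "Max ?L = n - 1" using inL fin by (intro Max_eqI) auto
    then show ?thesis using False unfolding gamma_gr_def by simp
  qed
qed

end
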